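(* The following are equivalent: (i) $S$ is strongly graded, i.e. $S_gS_h=S_{gh}$ for all $g,h\in G$; (ii) $S$ is symmetrically graded and, for every $g\in G$, every symmetrically graded left $S$-module $M$ with $M_g=0$ is the zero module.
   Context: $G$ is a group with identity $e$; $S=\bigoplus_{g\in G}S_g$ is an associative unital ring graded by $G$ ($S_gS_h\subseteq S_{gh}$), $R=S_e$, and $XY$ denotes the set of finite sums of products $xy$, $x\in X$, $y\in Y$. $S$ is symmetrically graded if $S_gS_{g^{-1}}S_g=S_g$ for every $g\in G$. A graded left $S$-module is $M=\bigoplus_g M_g$ with $S_gM_h\subseteq M_{gh}$; it is (left) symmetrically graded if $M_g=S_gS_{g^{-1}}M_g$ for every $g\in G$. *)

theory Defs
  imports Main
begin

text \<open>The group G is written additively via the type class group_add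
(not assumed commutative): identity e = 0, product g h = g + h, inverse = -g.\<close>

definition add_subgroup :: "'a::ring_1 set \<Rightarrow> bool" where
  "add_subgroup A \<longleftrightarrow> 0 \<in> A \<and> (\<forall>x\<in>A. \<forall>y\<in>A. x + y \<in> A) \<and> (\<forall>x\<in>A. - x \<in> A)"

definition graded_ring :: "('g::group_add \<Rightarrow> 'a::ring_1 set) \<Rightarrow> bool" where
  "graded_ring Sg \<longleftrightarrow>
     (\<forall>g. add_subgroup (Sg g)) \<and>
     (\<forall>g h. \<forall>x\<in>Sg g. \<forall>y\<in>Sg h. x * y \<in> Sg (g + h)) \<and>
     (\<forall>x. \<exists>H c. finite H \<and> (\<forall>h\<in>H. c h \<in> Sg h) \<and> x = (\<Sum>h\<in>H. c h)) \<and>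
     (\<forall>H c. finite H \<and> (\<forall>h\<in>H. c h \<in> Sg h) \<and> (\<Sum>h\<in>H. c h) = 0 \<longrightarrow> (\<forall>h\<in>H. c h = 0))"

definition setmul :: "'a::ring_1 set \<Rightarrow> 'a set \<Rightarrow> 'a set" where
  "setmul X Y = {(\<Sum>i<n. f i * h i) | (n::nat) (f::nat \<Rightarrow> 'a) h. \<forall>i<n. f i \<in> X \<and> h i \<in> Y}"

definition strongly_graded :: "('g::group_add \<Rightarrow> 'a::ring_1 set) \<Rightarrow> bool" where
  "strongly_graded Sg \<longleftrightarrow> (\<forall>g h. setmul (Sg g) (Sg h) = Sg (g + h))"

definition symmetrically_graded :: "('g::group_add \<Rightarrow> 'a::ring_1 set) \<Rightarrow> bool" where
  "symmetrically_graded Sg \<longleftrightarrow> (\<forall>g. setmul (setmul (Sg g) (Sg (- g))) (Sg g) = Sg g)"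

text \<open>A left S-module given explicitly: carrier M, addition add, zero z, scalar action sm.\<close>
definition left_module :: "'m set \<Rightarrow> ('m \<Rightarrow> 'm \<Rightarrow> 'm) \<Rightarrow> 'm \<Rightarrow> ('a::ring_1 \<Rightarrow> 'm \<Rightarrow> 'm) \<Rightarrow> bool" where
  "left_module M add z sm \<longleftrightarrow>
     z \<in> M \<and>
     (\<forall>x\<in>M. \<forall>y\<in>M. add x y \<in> M) \<and>
     (\<forall>x\<in>M. \<forall>y\<in>M. \<forall>w\<in>M. add (add x y) w = add x (add y w)) \<and>
     (\<forall>x\<in>M. \<forall>y\<in>M. add x y = add y x) \<and>
     (\<forall>x\<in>M. add z x = x) \<and>
     (\<forall>x\<in>M. \<exists>y\<in>M. add x y = z) \<and>
     (\<forall>a. \<forall>x\<in>M. sm a x \<in> M) \<and>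
     (\<forall>a. \<forall>x\<in>M. \<forall>y\<in>M. sm a (add x y) = add (sm a x) (sm a y)) \<and>
     (\<forall>a b. \<forall>x\<in>M. sm (a + b) x = add (sm a x) (sm b x)) \<and>
     (\<forall>a b. \<forall>x\<in>M. sm (a * b) x = sm a (sm b x)) \<and>
     (\<forall>x\<in>M. sm 1 x = x)"

definition msum :: "('m \<Rightarrow> 'm \<Rightarrow> 'm) \<Rightarrow> 'm \<Rightarrow> 'm list \<Rightarrow> 'm" where
  "msum add z xs = foldr add xs z"

definition graded_left_module ::
  "('g::group_add \<Rightarrow> 'a::ring_1 set) \<Rightarrow> 'm set \<Rightarrow> ('m \<Rightarrow> 'm \<Rightarrow> 'm) \<Rightarrow> 'm \<Rightarrow> ('a \<Rightarrow> 'm \<Rightarrow> 'm) \<Rightarrow> ('g \<Rightarrow> 'm set) \<Rightarrow> bool" where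
  "graded_left_module Sg M add z sm Mg \<longleftrightarrow>
     left_module M add z sm \<and>
     (\<forall>h. Mg h \<subseteq> M \<and> z \<in> Mg h \<and> (\<forall>x\<in>Mg h. \<forall>y\<in>Mg h. add x y \<in> Mg h) \<and>
          (\<forall>x\<in>Mg h. \<exists>y\<in>Mg h. add x y = z)) \<and>
     (\<forall>g h. \<forall>s\<in>Sg g. \<forall>x\<in>Mg h. sm s x \<in> Mg (g + h)) \<and>
     (\<forall>x\<in>M. \<exists>hs xs. length xs = length hs \<and> (\<forall>i<length hs. xs ! i \<in> Mg (hs ! i)) \<and>
                      x = msum add z xs) \<and>
     (\<forall>hs xs. distinct hs \<and> length xs = length hs \<and> (\<forall>i<length hs. xs ! i \<in> Mg (hs ! i)) \<and>
              msum add z xs = z \<longrightarrow> (\<forall>i<length hs. xs ! i = z))"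

definition setsmul :: "('m \<Rightarrow> 'm \<Rightarrow> 'm) \<Rightarrow> 'm \<Rightarrow> ('a::ring_1 \<Rightarrow> 'm \<Rightarrow> 'm) \<Rightarrow> 'a set \<Rightarrow> 'm set \<Rightarrow> 'm set" where
  "setsmul add z sm X N = {msum add z (map (\<lambda>(s, x). sm s x) ps) | ps. \<forall>p\<in>set ps. fst p \<in> X \<and> snd p \<in> N}"

definition sym_graded_module ::
  "('g::group_add \<Rightarrow> 'a::ring_1 set) \<Rightarrow> ('m \<Rightarrow> 'm \<Rightarrow> 'm) \<Rightarrow> 'm \<Rightarrow> ('a \<Rightarrow> 'm \<Rightarrow> 'm) \<Rightarrow> ('g \<Rightarrow> 'm set) \<Rightarrow> bool" where
  "sym_graded_module Sg add z sm Mg \<longleftrightarrow>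
     (\<forall>g. Mg g = setsmul add z sm (setmul (Sg g) (Sg (- g))) (Mg g))"

end

theory Submission imports Defs begin

lemma gr_sub: "graded_ring Sg \<Longrightarrow> add_subgroup (Sg g)"
  by (simp add: graded_ring_def)
lemma gr_mul: "graded_ring Sg \<Longrightarrow> x \<in> Sg g \<Longrightarrow> y \<in> Sg h \<Longrightarrow> x * y \<in> Sg (g + h)"
  by (simp add: graded_ring_def)
lemma gr_decomp: "graded_ring Sg \<Longrightarrow> \<exists>H c. finite H \<and> (\<forall>h\<in>H. c h \<in> Sg h) \<and> x = (\<Sum>h\<in>H. c h)"
  by (simp add: graded_ring_def)
lemma gr_zero: "graded_ring Sg \<Longrightarrow> 0 \<in> Sg g"
  by (simp add: graded_ring_def add_subgroup_def)
lemma gr_add: "graded_ring Sg \<Longrightarrow> x \<in> Sg g \<Longrightarrow> y \<in> Sg g \<Longrightarrow> x + y \<in> Sg g"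
  by (simp add: graded_ring_def add_subgroup_def)
lemma gr_neg: "graded_ring Sg \<Longrightarrow> x \<in> Sg g \<Longrightarrow> - x \<in> Sg g"
  by (simp add: graded_ring_def add_subgroup_def)
lemma gr_diff: "graded_ring Sg \<Longrightarrow> x \<in> Sg g \<Longrightarrow> y \<in> Sg g \<Longrightarrow> x - y \<in> Sg g"
  using gr_add gr_neg by (metis diff_conv_add_uminus)
lemma gr_sum: "graded_ring Sg \<Longrightarrow> (\<And>i. i \<in> I \<Longrightarrow> c i \<in> Sg g) \<Longrightarrow> sum c I \<in> Sg g"
  by (induction I rule: infinite_finite_induct) (auto simp: gr_zero gr_add)

lemma gr_uniq:
  assumes "graded_ring Sg" "finite U" "\<forall>h\<in>U. c h \<in> Sg h" "\<forall>h\<in>U. d h \<in> Sg h"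
    "sum c U = sum d U" "h \<in> U"
  shows "c h = d h"
proof -
  have "\<forall>h\<in>U. (\<lambda>h. c h - d h) h = 0"
    using assms(1) unfolding graded_ring_def
    apply (elim conjE)
    apply (erule allE[where x=U], erule allE[where x="\<lambda>h. c h - d h"])
    using assms gr_diff[OF assms(1)] by (simp add: sum_subtractf)
  thus ?thesis using assms(6) by simp
qed

lemma setmul_sub: "graded_ring Sg \<Longrightarrow> setmul (Sg a) (Sg b) \<subseteq> Sg (a + b)"
  unfolding setmul_def by (auto intro!: gr_sum gr_mul)

lemma setmul_0: "0 \<in> setmul X Y"
  unfolding setmul_def by (rule CollectI, rule exI[where x=0]) auto

lemma setmul_single: "x \<in> X \<Longrightarrow> y \<in> Y \<Longrightarrow> x * y \<in> setmul X Y"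
  unfolding setmul_def by (rule CollectI, rule exI[where x=1], rule exI[where x="\<lambda>_. x"], rule exI[where x="\<lambda>_. y"]) auto

lemma sum_split_nat: "(\<Sum>i<n+m. g i) = (\<Sum>i<n. g i) + (\<Sum>i<(m::nat). g (n+i))"
  by (induction m) (simp_all add: add.assoc)

lemma setmul_add: assumes "u \<in> setmul X Y" "v \<in> setmul X Y" shows "u + v \<in> setmul X Y"
proof -
  have "\<exists>(n::nat) f h. u = (\<Sum>i<n. f i * h i) \<and> (\<forall>i<n. f i \<in> X \<and> h i \<in> Y)"
    using assms(1) unfolding setmul_def by simp
  then obtain n f h where u: "u = (\<Sum>i<(n::nat). f i * h i)" "\<forall>i<n. f i \<in> X \<and> h i \<in> Y" by blast
  have "\<exists>(m::nat) f' h'. v = (\<Sum>i<m. f' i * h' i) \<and> (\<forall>i<m. f' i \<in> X \<and> h' i \<in> Y)"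
    using assms(2) unfolding setmul_def by simp
  then obtain m f' h' where v: "v = (\<Sum>i<(m::nat). f' i * h' i)" "\<forall>i<m. f' i \<in> X \<and> h' i \<in> Y" by blast
  define F where "F i = (if i < n then f i else f' (i - n))" for i
  define K where "K i = (if i < n then h i else h' (i - n))" for i
  have "(\<Sum>i<n+m. F i * K i) = (\<Sum>i<n. F i * K i) + (\<Sum>i<m. F (n+i) * K (n+i))"
    by (rule sum_split_nat)
  also have "\<dots> = u + v" using u v by (simp add: F_def K_def)
  finally have "u + v = (\<Sum>i<n+m. F i * K i)" by simp
  moreover have "\<forall>i<n+m. F i \<in> X \<and> K i \<in> Y" using u v by (auto simp: F_def K_def)
  ultimately show ?thesis unfolding setmul_def by blast
qed

lemma one_in_S0: assumes gr: "graded_ring Sg" shows "1 \<in> Sg 0"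
proof -
  obtain H c where H: "finite H" "\<forall>h\<in>H. c h \<in> Sg h" "1 = (\<Sum>h\<in>H. c h)"
    using gr_decomp[OF gr] by blast
  have A: "s * c h = 0" if s: "s \<in> Sg k" and h: "h \<in> H" "h \<noteq> 0" for s k h
  proof -
    define U where "U = insert k ((\<lambda>h. k + h) ` H)"
    define d where "d u = (if u \<in> (\<lambda>h. k + h) ` H then s * c (- k + u) else 0)" for u
    define e where "e u = (if u = k then s else 0)" for u
    have fU: "finite U" using H by (simp add: U_def)
    have inj: "inj_on (\<lambda>h. k + h) H" by (auto intro: inj_onI)
    have "sum d U = sum d ((\<lambda>h. k + h) ` H)"
      by (rule sum.mono_neutral_right) (auto simp: U_def d_def fU H(1))
    also have "\<dots> = (\<Sum>h\<in>H. s * c h)"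
      by (subst sum.reindex[OF inj]) (auto simp: d_def add.assoc[symmetric] intro!: sum.cong)
    also have "\<dots> = s * 1" by (simp add: H(3) sum_distrib_left)
    finally have sd: "sum d U = s" by simp
    have se: "sum e U = s" using fU unfolding U_def e_def by (subst sum.delta) auto
    have dS: "\<forall>u\<in>U. d u \<in> Sg u"
    proof
      fix u assume "u \<in> U"
      show "d u \<in> Sg u"
      proof (cases "u \<in> (+) k ` H")
        case True
        then obtain x where x: "x \<in> H" "u = k + x" by blast
        thus ?thesis using H(2) s gr_mul[OF gr] by (simp add: d_def add.assoc[symmetric])
      next
        case False thus ?thesis by (simp add: d_def gr_zero[OF gr])
      qed
    qed
    have eS: "\<forall>u\<in>U. e u \<in> Sg u"
      using s gr_zero[OF gr] by (auto simp: e_def)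
    have "d (k + h) = e (k + h)"
    proof (rule gr_uniq[OF gr fU dS eS])
      show "sum d U = sum e U" using sd se by simp
      show "k + h \<in> U" using h by (simp add: U_def)
    qed
    moreover have "k + h \<noteq> k" using h by (metis add.right_neutral add_left_cancel)
    ultimately show ?thesis using h by (simp add: d_def e_def)
  qed
  have B: "c h = 0" if "h \<in> H" "h \<noteq> 0" for h
  proof -
    have "c h = (\<Sum>k\<in>H. c k) * c h" by (simp add: H(3)[symmetric])
    also have "\<dots> = (\<Sum>k\<in>H. c k * c h)" by (simp add: sum_distrib_right)
    also have "\<dots> = 0" using A H(2) that by (auto intro!: sum.neutral)
    finally show ?thesis .
  qed
  have "sum c H = sum c (H \<inter> {0})"
    by (rule sum.mono_neutral_right) (use H B in auto)
  hence "1 = (\<Sum>h\<in>H \<inter> {0}. c h)" using H by simp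
  thus ?thesis using H gr_zero[OF gr] by (cases "0 \<in> H") auto
qed

lemma setmul_elim:
  assumes "u \<in> setmul X Y"
  obtains n f h where "u = (\<Sum>i<(n::nat). f i * h i)" "\<forall>i<n. f i \<in> X \<and> h i \<in> Y"
proof -
  have "\<exists>(n::nat) f h. u = (\<Sum>i<n. f i * h i) \<and> (\<forall>i<n. f i \<in> X \<and> h i \<in> Y)"
    using assms unfolding setmul_def by simp
  thus ?thesis using that by blast
qed

lemma setmul_intro: "u = (\<Sum>i<(n::nat). f i * h i) \<Longrightarrow> \<forall>i<n. f i \<in> X \<and> h i \<in> Y \<Longrightarrow> u \<in> setmul X Y"
  unfolding setmul_def by blast

lemma strong_from_units:
  assumes gr: "graded_ring Sg" and U: "\<And>g. 1 \<in> setmul (Sg (- g)) (Sg g)"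
  shows "strongly_graded Sg"
  unfolding strongly_graded_def
proof (intro allI equalityI)
  fix g h
  show "setmul (Sg g) (Sg h) \<subseteq> Sg (g + h)" by (rule setmul_sub[OF gr])
  show "Sg (g + h) \<subseteq> setmul (Sg g) (Sg h)"
  proof
    fix x assume x: "x \<in> Sg (g + h)"
    from U[of "- g"] obtain n a b where ab: "1 = (\<Sum>i<(n::nat). a i * b i)" "\<forall>i<n. a i \<in> Sg g \<and> b i \<in> Sg (- g)"
      by (auto elim: setmul_elim)
    have "x = (\<Sum>i<n. a i * b i) * x" using ab by simp
    also have "\<dots> = (\<Sum>i<n. a i * (b i * x))" by (simp add: sum_distrib_right mult.assoc)
    finally have "x = (\<Sum>i<n. a i * (b i * x))" .
    moreover have "\<forall>i<n. a i \<in> Sg g \<and> b i * x \<in> Sg h"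
      using ab gr_mul[OF gr _ x] by (metis minus_add_cancel)
    ultimately show "x \<in> setmul (Sg g) (Sg h)" by (rule setmul_intro)
  qed
qed

lemma mod_facts:
  assumes "left_module M add z sm"
  shows "\<And>m. m \<in> M \<Longrightarrow> sm 0 m = z" and "\<And>a. sm a z = z"
proof -
  note A = assms[unfolded left_module_def]
  show sm0: "sm 0 m = z" if m: "m \<in> M" for m
  proof -
    let ?u = "sm 0 m"
    have uM: "?u \<in> M" using A m by blast
    have uu: "?u = add ?u ?u" using A m by (metis add_0)
    have inv: "\<forall>x\<in>M. \<exists>y\<in>M. add x y = z" using A by blast
    obtain y where y: "y \<in> M" "add ?u y = z" using inv uM by blast
    have "z = add (add ?u ?u) y" using uu y by simp
    also have "\<dots> = add ?u z" using A uM y by metis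
    also have "\<dots> = ?u" using A uM by metis
    finally show ?thesis by simp
  qed
  fix a
  have "z \<in> M" using A by blast
  hence "sm a z = sm a (sm 0 z)" using sm0 by simp
  also have "\<dots> = sm (a * 0) z" using A \<open>z \<in> M\<close> by metis
  also have "\<dots> = z" using sm0 \<open>z \<in> M\<close> by simp
  finally show "sm a z = z" .
qed

lemma msum_zs: assumes "left_module M add z sm" "\<forall>y\<in>set xs. y = z" shows "msum add z xs = z"
  using assms(2)
proof (induction xs)
  case Nil thus ?case by (simp add: msum_def)
next
  case (Cons y ys)
  have "z \<in> M" "\<forall>x\<in>M. add z x = x" using assms(1) unfolding left_module_def by blast+
  thus ?case using Cons by (simp add: msum_def)
qed

lemma forward_module:
  assumes gr: "graded_ring Sg" and st: "strongly_graded Sg"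
    and gm: "graded_left_module Sg M add z sm Mg" and Mgz: "Mg g = {z}"
  shows "M = {z}"
proof -
  have lm: "left_module M add z sm" using gm unfolding graded_left_module_def by blast
  note A = lm[unfolded left_module_def]
  have MgM: "Mg h \<subseteq> M" for h using gm unfolding graded_left_module_def by blast
  have act: "\<And>s x g h. s \<in> Sg g \<Longrightarrow> x \<in> Mg h \<Longrightarrow> sm s x \<in> Mg (g + h)"
    using gm unfolding graded_left_module_def by blast
  have allz: "m = z" if m: "m \<in> Mg h" for h m
  proof -
    define k where "k = h + - g"
    have "1 \<in> setmul (Sg k) (Sg (- k))" using st one_in_S0[OF gr] unfolding strongly_graded_def by simp
    then obtain n a b where ab: "1 = (\<Sum>i<(n::nat). a i * b i)" "\<forall>i<n. a i \<in> Sg k \<and> b i \<in> Sg (- k)"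
      by (auto elim: setmul_elim)
    have mM: "m \<in> M" using m MgM by blast
    have bz: "sm (b i) m = z" if "i < n" for i
    proof -
      have "sm (b i) m \<in> Mg (- k + h)" using act ab(2) that m by blast
      moreover have "- k + h = g" by (simp add: k_def minus_add add.assoc)
      ultimately show ?thesis using Mgz by simp
    qed
    have "j \<le> n \<Longrightarrow> sm (\<Sum>i<j. a i * b i) m = z" for j
    proof (induction j)
      case 0 thus ?case using mod_facts(1)[OF lm mM] by simp
    next
      case (Suc j)
      have "sm (\<Sum>i<Suc j. a i * b i) m = add (sm (\<Sum>i<j. a i * b i) m) (sm (a j * b j) m)"
        using A mM by simp
      also have "\<dots> = add z (sm (a j) (sm (b j) m))" using Suc A mM by simp
      also have "\<dots> = add z z" using bz Suc mod_facts(2)[OF lm] by simp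
      also have "\<dots> = z" using A by blast
      finally show ?case .
    qed
    hence "sm 1 m = z" using ab(1) by (metis order_refl)
    thus ?thesis using A mM by simp
  qed
  show ?thesis
  proof
    show "{z} \<subseteq> M" using A by blast
    show "M \<subseteq> {z}"
    proof
      fix x assume "x \<in> M"
      then obtain hs xs where d: "length xs = length hs" "\<forall>i<length hs. xs ! i \<in> Mg (hs ! i)" "x = msum add z xs"
        using gm unfolding graded_left_module_def by blast
      have "\<forall>y\<in>set xs. y = z" using d allz by (metis in_set_conv_nth)
      thus "x \<in> {z}" using msum_zs[OF lm] d by simp
    qed
  qed
qed

definition DL :: "('g::group_add \<Rightarrow> 'a::ring_1 set) \<Rightarrow> 'g \<Rightarrow> 'a \<Rightarrow> bool" where
  "DL Sg g x \<longleftrightarrow> (\<exists>F l. finite F \<and> (\<forall>h\<in>F. l h \<in> Sg h \<and> l h \<in> setmul (Sg (h + - g)) (Sg g)) \<and> x = sum l F)"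

lemma DL_0: "DL Sg g 0"
  unfolding DL_def by (rule exI[where x="{}"]) simp

lemma DL_add:
  assumes gr: "graded_ring Sg" and u: "DL Sg g u" and v: "DL Sg g v"
  shows "DL Sg g (u + v)"
proof -
  obtain F1 l1 where 1: "finite F1" "\<forall>h\<in>F1. l1 h \<in> Sg h \<and> l1 h \<in> setmul (Sg (h + - g)) (Sg g)" "u = sum l1 F1"
    using u unfolding DL_def by blast
  obtain F2 l2 where 2: "finite F2" "\<forall>h\<in>F2. l2 h \<in> Sg h \<and> l2 h \<in> setmul (Sg (h + - g)) (Sg g)" "v = sum l2 F2"
    using v unfolding DL_def by blast
  define e1 where "e1 h = (if h \<in> F1 then l1 h else 0)" for h
  define e2 where "e2 h = (if h \<in> F2 then l2 h else 0)" for h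
  have s1: "sum e1 (F1 \<union> F2) = u"
  proof -
    have "sum e1 (F1 \<union> F2) = sum e1 F1" by (rule sum.mono_neutral_right) (use 1 2 in \<open>auto simp: e1_def\<close>)
    thus ?thesis using 1 by (simp add: e1_def)
  qed
  have s2: "sum e2 (F1 \<union> F2) = v"
  proof -
    have "sum e2 (F1 \<union> F2) = sum e2 F2" by (rule sum.mono_neutral_right) (use 1 2 in \<open>auto simp: e2_def\<close>)
    thus ?thesis using 2 by (simp add: e2_def)
  qed
  have m1: "e1 h \<in> Sg h \<and> e1 h \<in> setmul (Sg (h + - g)) (Sg g)" for h
    using 1 gr_zero[OF gr] setmul_0 by (auto simp: e1_def)
  have m2: "e2 h \<in> Sg h \<and> e2 h \<in> setmul (Sg (h + - g)) (Sg g)" for h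
    using 2 gr_zero[OF gr] setmul_0 by (auto simp: e2_def)
  show ?thesis unfolding DL_def
  proof (intro exI conjI)
    show "finite (F1 \<union> F2)" using 1 2 by simp
    show "u + v = (\<Sum>h\<in>F1 \<union> F2. e1 h + e2 h)" using s1 s2 by (simp add: sum.distrib)
    show "\<forall>h\<in>F1 \<union> F2. e1 h + e2 h \<in> Sg h \<and> e1 h + e2 h \<in> setmul (Sg (h + - g)) (Sg g)"
    proof
      fix h
      show "e1 h + e2 h \<in> Sg h \<and> e1 h + e2 h \<in> setmul (Sg (h + - g)) (Sg g)"
      proof
        show "e1 h + e2 h \<in> Sg h" using m1[of h] m2[of h] by (intro gr_add[OF gr]) simp_all
        show "e1 h + e2 h \<in> setmul (Sg (h + - g)) (Sg g)" using m1[of h] m2[of h] by (intro setmul_add) simp_all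
      qed
    qed
  qed
qed

lemma DL_mul:
  assumes gr: "graded_ring Sg" and y: "y \<in> Sg g"
  shows "DL Sg g (s * y)"
proof -
  obtain K c where K: "finite K" "\<forall>k\<in>K. c k \<in> Sg k" "s = (\<Sum>k\<in>K. c k)"
    using gr_decomp[OF gr] by blast
  have inj: "inj_on (\<lambda>k. k + g) K" by (auto intro: inj_onI)
  have "s * y = (\<Sum>k\<in>K. c k * y)" using K by (simp add: sum_distrib_right)
  also have "\<dots> = (\<Sum>h\<in>(\<lambda>k. k + g) ` K. c (h + - g) * y)"
    by (subst sum.reindex[OF inj]) (simp add: add.assoc)
  finally have e: "s * y = (\<Sum>h\<in>(\<lambda>k. k + g) ` K. c (h + - g) * y)" .
  have m: "\<forall>h\<in>(\<lambda>k. k + g) ` K. c (h + - g) * y \<in> Sg h \<and> c (h + - g) * y \<in> setmul (Sg (h + - g)) (Sg g)"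
  proof -
    have "\<forall>k\<in>K. c k * y \<in> Sg (k + g) \<and> c k * y \<in> setmul (Sg k) (Sg g)"
    proof
      fix k assume k: "k \<in> K"
      have ck: "c k \<in> Sg k" using K(2) k by blast
      show "c k * y \<in> Sg (k + g) \<and> c k * y \<in> setmul (Sg k) (Sg g)"
        using gr_mul[OF gr ck y] setmul_single[OF ck y] by blast
    qed
    thus ?thesis by (simp add: add.assoc)
  qed
  show ?thesis unfolding DL_def
    by (rule exI[where x="(\<lambda>k. k + g) ` K"], rule exI[where x="\<lambda>h. c (h + - g) * y"]) (use K(1) e m in simp)
qed

lemma L_graded:
  assumes gr: "graded_ring Sg" and x: "x \<in> setmul UNIV (Sg g)"
  shows "DL Sg g x"
proof -
  obtain n a b where ab: "x = (\<Sum>i<(n::nat). a i * b i)" "\<forall>i<n. a i \<in> UNIV \<and> b i \<in> Sg g"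
    using x by (auto elim: setmul_elim)
  have "j \<le> n \<Longrightarrow> DL Sg g (\<Sum>i<j. a i * b i)" for j
  proof (induction j)
    case 0 thus ?case using DL_0 by simp
  next
    case (Suc j)
    hence "DL Sg g (\<Sum>i<j. a i * b i)" "b j \<in> Sg g" using ab(2) by simp_all
    thus ?case using DL_add[OF gr _ DL_mul[OF gr, of "b j" g "a j"]] by simp
  qed
  thus ?thesis using ab(1) by blast
qed

locale qmod =
  fixes L :: "'a::ring_1 set" and f :: "'a \<Rightarrow> 'm"
  assumes L0: "0 \<in> L" and Ladd: "\<And>x y. x \<in> L \<Longrightarrow> y \<in> L \<Longrightarrow> x + y \<in> L"
    and Lneg: "\<And>x. x \<in> L \<Longrightarrow> - x \<in> L" and Lmul: "\<And>x s. x \<in> L \<Longrightarrow> s * x \<in> L"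
    and finj: "inj f"
begin

definition r :: "'a \<Rightarrow> 'a" where "r x = (SOME y. x - y \<in> L)"
definition phi :: "'a \<Rightarrow> 'm" where "phi x = f (r x)"
definition qadd :: "'m \<Rightarrow> 'm \<Rightarrow> 'm" where "qadd m n = phi (inv f m + inv f n)"
definition qsm :: "'a \<Rightarrow> 'm \<Rightarrow> 'm" where "qsm a m = phi (a * inv f m)"

lemma Ldiff: "x \<in> L \<Longrightarrow> y \<in> L \<Longrightarrow> x - y \<in> L"
  using Ladd Lneg by (metis diff_conv_add_uminus)

lemma rL: "x - r x \<in> L"
proof -
  have "\<exists>y. x - y \<in> L" using L0 by (rule_tac x=x in exI) simp
  thus ?thesis unfolding r_def by (rule someI_ex)
qed

lemma r_eq: assumes "x - y \<in> L" shows "r x = r y"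
proof -
  have "(\<lambda>w. x - w \<in> L) = (\<lambda>w. y - w \<in> L)"
  proof (rule ext, rule iffI)
    fix w assume "x - w \<in> L"
    hence "(x - w) - (x - y) \<in> L" using assms Ldiff by blast
    thus "y - w \<in> L" by (simp add: algebra_simps)
  next
    fix w assume "y - w \<in> L"
    hence "(x - y) + (y - w) \<in> L" using assms Ladd by blast
    thus "x - w \<in> L" by (simp add: algebra_simps)
  qed
  thus ?thesis unfolding r_def by simp
qed

lemma phi_eq: "phi x = phi y \<longleftrightarrow> x - y \<in> L"
proof
  assume "phi x = phi y"
  hence rr: "r x = r y" using finj unfolding phi_def by (simp add: inj_eq)
  have "(x - r x) - (y - r y) \<in> L" using rL Ldiff by blast
  thus "x - y \<in> L" using rr by (simp add: algebra_simps)
next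
  assume "x - y \<in> L" thus "phi x = phi y" unfolding phi_def using r_eq by simp
qed

lemma invphi: "inv f (phi x) = r x"
  unfolding phi_def using finj by simp

lemma phi_r: "phi (r x) = phi x"
  unfolding phi_eq using Lneg[OF rL[of x]] by simp

lemma qadd_phi: "qadd (phi x) (phi y) = phi (x + y)"
proof -
  have "(x - r x) + (y - r y) \<in> L" using rL Ladd by blast
  hence "(r x + r y) - (x + y) \<in> L" using Lneg by (fastforce simp: algebra_simps)
  thus ?thesis unfolding qadd_def invphi phi_eq .
qed

lemma qsm_phi: "qsm a (phi x) = phi (a * x)"
proof -
  have "a * (x - r x) \<in> L" using rL Lmul by blast
  hence "- (a * (x - r x)) \<in> L" by (rule Lneg)
  hence "a * r x - a * x \<in> L" by (simp add: algebra_simps)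
  thus ?thesis unfolding qsm_def invphi phi_eq .
qed

lemma msum_phi: "msum qadd (phi 0) (map phi xs) = phi (sum_list xs)"
  by (induction xs) (simp_all add: msum_def qadd_phi)

lemma qmodule: "left_module (range phi) qadd (phi 0) qsm"
proof -
  have "\<exists>y. phi (x + y) = phi 0" for x by (rule exI[where x="- x"]) simp
  thus ?thesis unfolding left_module_def
    by (auto simp: qadd_phi qsm_phi algebra_simps distrib_right mult.assoc)
qed

end


lemma setmul_UNIV_neg: assumes "x \<in> setmul UNIV Y" shows "- x \<in> setmul UNIV Y"
proof -
  obtain n a b where ab: "x = (\<Sum>i<(n::nat). a i * b i)" "\<forall>i<n. a i \<in> UNIV \<and> b i \<in> Y"
    using assms by (auto elim: setmul_elim)
  have "- x = (\<Sum>i<n. (- a i) * b i)" using ab by (simp add: sum_negf)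
  thus ?thesis using ab(2) by (intro setmul_intro[where f="\<lambda>i. - a i" and h=b]) auto
qed

lemma setmul_UNIV_mul: assumes "x \<in> setmul UNIV Y" shows "s * x \<in> setmul UNIV Y"
proof -
  obtain n a b where ab: "x = (\<Sum>i<(n::nat). a i * b i)" "\<forall>i<n. a i \<in> UNIV \<and> b i \<in> Y"
    using assms by (auto elim: setmul_elim)
  have "s * x = (\<Sum>i<n. (s * a i) * b i)" using ab by (simp add: sum_distrib_left mult.assoc)
  thus ?thesis using ab(2) by (intro setmul_intro[where f="\<lambda>i. s * a i" and h=b]) auto
qed

lemma setmul_mono_UNIV: "x \<in> setmul X Y \<Longrightarrow> x \<in> setmul UNIV Y"
  by (auto elim!: setmul_elim intro!: setmul_intro)

lemma msum_Cons: "msum add z (x # xs) = add x (msum add z xs)"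
  by (simp add: msum_def)

lemma sum_list_upt_lessThan: "sum_list (map f [0..<n]) = (\<Sum>i<n. f i)"
  by (simp add: sum_set_upt_conv_sum_list_nat[symmetric] atLeast0LessThan)

lemma backward_unit:
  fixes Sg :: "'g::group_add \<Rightarrow> 'a::ring_1 set" and f :: "'a \<Rightarrow> 'm"
  assumes gr: "graded_ring Sg" and sym: "symmetrically_graded Sg" and finj: "inj f"
    and H: "\<forall>g (M :: 'm set) add z sm Mg.
              graded_left_module Sg M add z sm Mg \<and> sym_graded_module Sg add z sm Mg \<and>
              Mg g = {z} \<longrightarrow> M = {z}"
  shows "1 \<in> setmul (Sg (- g)) (Sg g)"
proof -
  define L where "L = setmul UNIV (Sg g)"
  interpret q: qmod L f
    by unfold_locales (auto simp: L_def setmul_0 setmul_add setmul_UNIV_neg setmul_UNIV_mul finj)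
  define Mg where "Mg h = q.phi ` Sg h" for h
  have lm: "left_module (range q.phi) q.qadd (q.phi 0) q.qsm" by (rule q.qmodule)
  have c2: "\<forall>h. Mg h \<subseteq> range q.phi \<and> q.phi 0 \<in> Mg h \<and> (\<forall>x\<in>Mg h. \<forall>y\<in>Mg h. q.qadd x y \<in> Mg h) \<and>
          (\<forall>x\<in>Mg h. \<exists>y\<in>Mg h. q.qadd x y = q.phi 0)"
  proof
    fix h
    have "\<exists>y\<in>Mg h. q.qadd (q.phi x) y = q.phi 0" if "x \<in> Sg h" for x
      using that gr_neg[OF gr] by (intro bexI[where x="q.phi (- x)"]) (auto simp: Mg_def q.qadd_phi)
    thus "Mg h \<subseteq> range q.phi \<and> q.phi 0 \<in> Mg h \<and> (\<forall>x\<in>Mg h. \<forall>y\<in>Mg h. q.qadd x y \<in> Mg h) \<and>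
          (\<forall>x\<in>Mg h. \<exists>y\<in>Mg h. q.qadd x y = q.phi 0)"
      using gr_zero[OF gr] gr_add[OF gr] by (auto simp: Mg_def q.qadd_phi)
  qed
  have c3: "\<forall>g h. \<forall>s\<in>Sg g. \<forall>x\<in>Mg h. q.qsm s x \<in> Mg (g + h)"
    using gr_mul[OF gr] by (auto simp: Mg_def q.qsm_phi)
  have c4: "\<forall>x\<in>range q.phi. \<exists>hs xs. length xs = length hs \<and> (\<forall>i<length hs. xs ! i \<in> Mg (hs ! i)) \<and>
                      x = msum q.qadd (q.phi 0) xs"
  proof
    fix x assume "x \<in> range q.phi"
    then obtain y where y: "x = q.phi y" by blast
    obtain K c where K: "finite K" "\<forall>h\<in>K. c h \<in> Sg h" "y = (\<Sum>h\<in>K. c h)"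
      using gr_decomp[OF gr] by blast
    obtain hs where hs: "set hs = K" "distinct hs" using finite_distinct_list[OF K(1)] by blast
    show "\<exists>hs xs. length xs = length hs \<and> (\<forall>i<length hs. xs ! i \<in> Mg (hs ! i)) \<and>
                      x = msum q.qadd (q.phi 0) xs"
    proof (intro exI conjI)
      show "length (map q.phi (map c hs)) = length hs" by simp
      show "\<forall>i<length hs. map q.phi (map c hs) ! i \<in> Mg (hs ! i)"
        using K(2) hs(1) by (auto simp: Mg_def)
      show "x = msum q.qadd (q.phi 0) (map q.phi (map c hs))"
        unfolding q.msum_phi y K(3) using hs by (simp add: sum_list_distinct_conv_sum_set)
    qed
  qed
  have c5: "\<forall>hs xs. distinct hs \<and> length xs = length hs \<and> (\<forall>i<length hs. xs ! i \<in> Mg (hs ! i)) \<and>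
              msum q.qadd (q.phi 0) xs = q.phi 0 \<longrightarrow> (\<forall>i<length hs. xs ! i = q.phi 0)"
  proof (rule allI, rule allI, rule impI)
    fix hs xs assume A: "distinct hs \<and> length xs = length hs \<and> (\<forall>i<length hs. xs ! i \<in> Mg (hs ! i)) \<and>
              msum q.qadd (q.phi 0) xs = q.phi 0"
    define n where "n = length hs"
    have "\<forall>i. \<exists>y. i < n \<longrightarrow> y \<in> Sg (hs ! i) \<and> xs ! i = q.phi y"
      using A by (auto simp: Mg_def n_def)
    then obtain a where a: "\<And>i. i < n \<Longrightarrow> a i \<in> Sg (hs ! i) \<and> xs ! i = q.phi (a i)"
      by metis
    have xs: "xs = map q.phi (map a [0..<n])"
      by (rule nth_equalityI) (use A a in \<open>auto simp: n_def\<close>)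
    have "q.phi (\<Sum>i<n. a i) = q.phi 0"
      using A unfolding xs q.msum_phi by (simp add: sum_list_upt_lessThan n_def)
    hence sL: "(\<Sum>i<n. a i) \<in> L" unfolding q.phi_eq by simp
    define b where "b h = a (SOME i. i < n \<and> hs ! i = h)" for h
    have bh: "b (hs ! i) = a i" if "i < n" for i
    proof -
      have "(SOME j. j < n \<and> hs ! j = hs ! i) = i"
      proof (rule some_equality)
        show "i < n \<and> hs ! i = hs ! i" using that by simp
        fix j assume "j < n \<and> hs ! j = hs ! i"
        thus "j = i" using that A nth_eq_iff_index_eq n_def by metis
      qed
      thus ?thesis by (simp add: b_def)
    qed
    have inj: "inj_on (nth hs) {..<n}" using A by (intro inj_on_nth) (auto simp: n_def)
    have seths: "set hs = nth hs ` {..<n}" by (auto simp: n_def in_set_conv_nth)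
    have "sum b (set hs) = (\<Sum>i<n. a i)"
      unfolding seths by (subst sum.reindex[OF inj]) (simp add: bh)
    hence "DL Sg g (sum b (set hs))" using L_graded[OF gr] sL L_def by simp
    then obtain F l where F: "finite F" "\<forall>h\<in>F. l h \<in> Sg h \<and> l h \<in> setmul (Sg (h + - g)) (Sg g)"
      "sum b (set hs) = sum l F" unfolding DL_def by blast
    define U where "U = set hs \<union> F"
    define eb where "eb h = (if h \<in> set hs then b h else 0)" for h
    define el where "el h = (if h \<in> F then l h else 0)" for h
    have fU: "finite U" using F by (simp add: U_def)
    have "sum eb U = sum eb (set hs)" by (rule sum.mono_neutral_right) (auto simp: U_def eb_def F)
    also have "\<dots> = sum b (set hs)" by (simp add: eb_def)
    also have "\<dots> = sum l F" by (rule F(3))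
    also have "\<dots> = sum el F" by (simp add: el_def)
    also have "\<dots> = sum el U" by (rule sum.mono_neutral_left) (auto simp: U_def el_def F)
    finally have seq: "sum eb U = sum el U" .
    have ebS: "\<forall>h\<in>U. eb h \<in> Sg h"
    proof
      fix h assume "h \<in> U"
      show "eb h \<in> Sg h"
      proof (cases "h \<in> set hs")
        case True
        then obtain i where i: "i < n" "h = hs ! i" by (auto simp: n_def in_set_conv_nth)
        thus ?thesis using a bh True by (simp add: eb_def)
      next
        case False thus ?thesis using gr_zero[OF gr] by (simp add: eb_def)
      qed
    qed
    have elS: "\<forall>h\<in>U. el h \<in> Sg h" using F gr_zero[OF gr] by (auto simp: el_def)
    have elL: "el h \<in> L" for h using F(2) setmul_mono_UNIV setmul_0 by (auto simp: el_def L_def)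
    show "\<forall>i<length hs. xs ! i = q.phi 0"
    proof (intro allI impI)
      fix i assume i: "i < length hs"
      have hU: "hs ! i \<in> U" using i by (simp add: U_def)
      have "eb (hs ! i) = el (hs ! i)" by (rule gr_uniq[OF gr fU ebS elS seq hU])
      hence "a i \<in> L" using bh[of i] i elL by (simp add: eb_def n_def)
      hence "q.phi (a i) = q.phi 0" unfolding q.phi_eq by simp
      thus "xs ! i = q.phi 0" using a[of i] i by (simp add: n_def)
    qed
  qed
  have gm: "graded_left_module Sg (range q.phi) q.qadd (q.phi 0) q.qsm Mg"
    unfolding graded_left_module_def using lm c2 c3 c4 c5 by blast
  have msum_in: "(\<forall>p\<in>set ps. fst p \<in> setmul (Sg h) (Sg (- h)) \<and> snd p \<in> Mg h) \<Longrightarrow>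
     msum q.qadd (q.phi 0) (map (\<lambda>(s, x). q.qsm s x) ps) \<in> Mg h" for ps h
  proof (induction ps)
    case Nil thus ?case using gr_zero[OF gr] by (simp add: msum_def Mg_def)
  next
    case (Cons p ps)
    obtain s m where p: "p = (s, m)" by (cases p)
    have s0: "s \<in> Sg 0" using Cons.prems p setmul_sub[OF gr, of h "- h"] by auto
    obtain y where y: "m = q.phi y" "y \<in> Sg h" using Cons.prems p by (auto simp: Mg_def)
    obtain w where w: "msum q.qadd (q.phi 0) (map (\<lambda>(s, x). q.qsm s x) ps) = q.phi w" "w \<in> Sg h"
      using Cons by (auto simp: Mg_def)
    have "s * y \<in> Sg h" using gr_mul[OF gr s0 y(2)] by simp
    hence "s * y + w \<in> Sg h" using w(2) gr_add[OF gr] by blast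
    thus ?case using p y w by (simp add: msum_Cons q.qsm_phi q.qadd_phi Mg_def)
  qed
  have sg: "sym_graded_module Sg q.qadd (q.phi 0) q.qsm Mg"
    unfolding sym_graded_module_def
  proof (intro allI equalityI subsetI)
    fix h x assume "x \<in> Mg h"
    then obtain y where y: "x = q.phi y" "y \<in> Sg h" by (auto simp: Mg_def)
    have "y \<in> setmul (setmul (Sg h) (Sg (- h))) (Sg h)" using sym y(2) unfolding symmetrically_graded_def by simp
    then obtain n p t where pt: "y = (\<Sum>i<(n::nat). p i * t i)" "\<forall>i<n. p i \<in> setmul (Sg h) (Sg (- h)) \<and> t i \<in> Sg h"
      by (auto elim: setmul_elim)
    define ps where "ps = map (\<lambda>i. (p i, q.phi (t i))) [0..<n]"
    have mm: "map (\<lambda>(s, x). q.qsm s x) ps = map q.phi (map (\<lambda>i. p i * t i) [0..<n])"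
      by (simp add: ps_def q.qsm_phi)
    have "x = msum q.qadd (q.phi 0) (map (\<lambda>(s, x). q.qsm s x) ps)"
      unfolding mm q.msum_phi sum_list_upt_lessThan using y pt by simp
    moreover have "\<forall>pp\<in>set ps. fst pp \<in> setmul (Sg h) (Sg (- h)) \<and> snd pp \<in> Mg h"
      using pt(2) by (auto simp: ps_def Mg_def)
    ultimately show "x \<in> setsmul q.qadd (q.phi 0) q.qsm (setmul (Sg h) (Sg (- h))) (Mg h)"
      unfolding setsmul_def by blast
  next
    fix h x assume "x \<in> setsmul q.qadd (q.phi 0) q.qsm (setmul (Sg h) (Sg (- h))) (Mg h)"
    then obtain ps where "x = msum q.qadd (q.phi 0) (map (\<lambda>(s, x). q.qsm s x) ps)"
      "\<forall>p\<in>set ps. fst p \<in> setmul (Sg h) (Sg (- h)) \<and> snd p \<in> Mg h"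
      unfolding setsmul_def by blast
    thus "x \<in> Mg h" using msum_in by simp
  qed
  have mgz: "Mg g = {q.phi 0}"
  proof
    show "{q.phi 0} \<subseteq> Mg g" using gr_zero[OF gr] by (auto simp: Mg_def)
    show "Mg g \<subseteq> {q.phi 0}"
    proof
      fix x assume "x \<in> Mg g"
      then obtain y where y: "x = q.phi y" "y \<in> Sg g" by (auto simp: Mg_def)
      have "1 * y \<in> L" unfolding L_def by (rule setmul_single) (use y in auto)
      thus "x \<in> {q.phi 0}" using y q.phi_eq by simp
    qed
  qed
  have "range q.phi = {q.phi 0}" using H gm sg mgz by blast
  hence "q.phi 1 = q.phi 0" by blast
  hence "1 \<in> L" unfolding q.phi_eq by simp
  hence "DL Sg g 1" using L_graded[OF gr] L_def by simp
  then obtain F l where F: "finite F" "\<forall>h\<in>F. l h \<in> Sg h \<and> l h \<in> setmul (Sg (h + - g)) (Sg g)"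
    "1 = sum l F" unfolding DL_def by blast
  define U where "U = insert 0 F"
  define el where "el h = (if h \<in> F then l h else 0)" for h
  define e0 where "e0 h = (if h = (0::'g) then (1::'a) else 0)" for h
  have fU: "finite U" using F by (simp add: U_def)
  have "sum el U = sum el F" by (rule sum.mono_neutral_right) (auto simp: U_def el_def F)
  also have "\<dots> = 1" using F(3) by (simp add: el_def)
  finally have s1: "sum el U = 1" .
  have s2: "sum e0 U = 1" using fU unfolding e0_def U_def by (subst sum.delta) auto
  have elS: "\<forall>h\<in>U. el h \<in> Sg h" using F gr_zero[OF gr] by (auto simp: el_def)
  have e0S: "\<forall>h\<in>U. e0 h \<in> Sg h" using one_in_S0[OF gr] gr_zero[OF gr] by (auto simp: e0_def)
  have "el 0 = e0 0" by (rule gr_uniq[OF gr fU elS e0S]) (use s1 s2 in \<open>auto simp: U_def\<close>)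
  hence "el 0 = 1" by (simp add: e0_def)
  thus ?thesis using F(2) setmul_0 by (cases "0 \<in> F") (auto simp: el_def)
qed


theorem mainTheorem6:
  fixes Sg :: "'g::group_add \<Rightarrow> 'a::ring_1 set"
  assumes "graded_ring Sg"
    and "\<exists>f :: 'a \<Rightarrow> 'm. inj f"
  shows "strongly_graded Sg \<longleftrightarrow>
           symmetrically_graded Sg \<and>
           (\<forall>g (M :: 'm set) add z sm Mg.
              graded_left_module Sg M add z sm Mg \<and> sym_graded_module Sg add z sm Mg \<and>
              Mg g = {z} \<longrightarrow> M = {z})"
proof
  assume st: "strongly_graded Sg"
  have "symmetrically_graded Sg"
    using st unfolding symmetrically_graded_def strongly_graded_def by simp
  moreover have "\<forall>g (M :: 'm set) add z sm Mg.
              graded_left_module Sg M add z sm Mg \<and> sym_graded_module Sg add z sm Mg \<and>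
              Mg g = {z} \<longrightarrow> M = {z}"
  proof (intro allI impI)
    fix g and M :: "'m set" and add z sm Mg
    assume "graded_left_module Sg M add z sm Mg \<and> sym_graded_module Sg add z sm Mg \<and> Mg g = {z}"
    thus "M = {z}" using forward_module[OF assms(1) st] by (elim conjE)
  qed
  ultimately show "symmetrically_graded Sg \<and>
           (\<forall>g (M :: 'm set) add z sm Mg.
              graded_left_module Sg M add z sm Mg \<and> sym_graded_module Sg add z sm Mg \<and>
              Mg g = {z} \<longrightarrow> M = {z})" by blast
next
  assume R: "symmetrically_graded Sg \<and>
           (\<forall>g (M :: 'm set) add z sm Mg.
              graded_left_module Sg M add z sm Mg \<and> sym_graded_module Sg add z sm Mg \<and>
              Mg g = {z} \<longrightarrow> M = {z})"
  obtain f :: "'a \<Rightarrow> 'm" where f: "inj f" using assms(2) by blast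
  show "strongly_graded Sg"
    by (rule strong_from_units[OF assms(1)], rule backward_unit[OF assms(1) conjunct1[OF R] f conjunct2[OF R]])
qed

end
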